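(* For any $d\in\mathbb N$, the map $(\mu_1,\mu_2,\Sigma_1,\Sigma_2)\mapsto \mathbb G\big((\mu_1,\Sigma_1),(\mu_2,\Sigma_2)\big)^2$ is jointly convex and continuous on $\mathbb R^d\times\mathbb R^d\times\mathbb S^d_+\times\mathbb S^d_+$.
   Context: $\mathbb S^d_+$ is the cone of symmetric positive semidefinite $d\times d$ matrices; $A^{1/2}$ denotes the unique positive semidefinite square root of $A\in\mathbb S^d_+$. The Gelbrich distance between $(\mu_1,\Sigma_1),(\mu_2,\Sigma_2)\in\mathbb R^d\times\mathbb S^d_+$ is $$\mathbb G\big((\mu_1,\Sigma_1),(\mu_2,\Sigma_2)\big)=\sqrt{\|\mu_1-\mu_2\|^2+\mathrm{Tr}\big[\Sigma_1+\Sigma_2-2\big(\Sigma_2^{1/2}\Sigma_1\Sigma_2^{1/2}\big)^{1/2}\big]}.$$ *)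

theory Defs
  imports "HOL-Analysis.Analysis"
begin

text \<open>Symmetric positive semidefinite real d x d matrices (d = CARD('n)).\<close>
definition psd :: "real^'n^'n \<Rightarrow> bool" where
  "psd A \<longleftrightarrow> transpose A = A \<and> (\<forall>x. 0 \<le> x \<bullet> (A *v x))"

definition psd_set :: "(real^'n^'n) set" where
  "psd_set = {A. psd A}"

definition msqrt :: "real^'n^'n \<Rightarrow> real^'n^'n" where
  "msqrt A = (THE B. psd B \<and> B ** B = A)"

definition gelbrich :: "((real^'n) \<times> (real^'n^'n)) \<Rightarrow> ((real^'n) \<times> (real^'n^'n)) \<Rightarrow> real" where
  "gelbrich p q = (case p of (m1, S1) \<Rightarrow> case q of (m2, S2) \<Rightarrow>
     sqrt ((norm (m1 - m2))\<^sup>2 +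
           trace (S1 + S2 - 2 *\<^sub>R msqrt (msqrt S2 ** S1 ** msqrt S2))))"

end

theory Submission
  imports Defs
begin

lemma quad_nonneg_zero:
  fixes a b :: real
  assumes "\<And>t. 0 \<le> a * t + b * t^2"
  shows "a = 0"
proof (rule ccontr)
  assume a: "a \<noteq> 0"
  define c where "c = 1 + \<bar>b\<bar>"
  define t where "t = - a / c"
  have d: "c > 0" unfolding c_def by simp
  have "a * t + b * t^2 = a^2 / c^2 * (b - c)"
    unfolding t_def using d by (simp add: field_simps power2_eq_square)
  also have "\<dots> < 0"
  proof (rule mult_pos_neg)
    show "0 < a^2 / c^2" using a d by simp
    show "b - c < 0" unfolding c_def by (simp add: abs_if)
  qed
  finally show False using assms[of t] by simp
qed

lemma sym_inner:
  fixes A :: "real^'n^'n"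
  assumes "transpose A = A"
  shows "(A *v x) \<bullet> y = x \<bullet> (A *v y)"
proof -
  have "x \<bullet> (A *v y) = (x v* A) \<bullet> y" by (simp add: dot_lmul_matrix)
  also have "x v* A = transpose A *v x" by simp
  finally show ?thesis using assms by simp
qed

lemma spectral_subspace:
  fixes A :: "real^'n^'n"
  assumes symA: "transpose A = A"
  shows "subspace V \<Longrightarrow> (\<forall>x\<in>V. A *v x \<in> V) \<Longrightarrow>
    \<exists>T. finite T \<and> T \<subseteq> V \<and> pairwise orthogonal T \<and>
        (\<forall>v\<in>T. norm v = 1 \<and> A *v v = (v \<bullet> (A *v v)) *\<^sub>R v) \<and> V \<subseteq> span T"
proof (induction "dim V" arbitrary: V rule: less_induct)
  case less
  show ?case
  proof (cases "V \<subseteq> {0}")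
    case True
    then show ?thesis by (intro exI[of _ "{}"]) auto
  next
    case False
    then obtain z where z: "z \<in> V" "z \<noteq> 0" by auto
    define K where "K = V \<inter> sphere 0 1"
    have cK: "compact K" unfolding K_def
      using closed_subspace[OF less.prems(1)] compact_sphere by (simp add: closed_Int_compact)
    have "(1 / norm z) *\<^sub>R z \<in> K"
      unfolding K_def using z less.prems(1) by (auto simp: subspace_scale)
    hence ne: "K \<noteq> {}" by auto
    have cont: "continuous_on K (\<lambda>x. x \<bullet> (A *v x))"
      by (intro continuous_on_inner continuous_on_id linear_continuous_on matrix_vector_mul_bounded_linear)
    from continuous_attains_sup[OF cK ne cont] obtain x0 where x0: "x0 \<in> K" and mx: "\<And>y. y \<in> K \<Longrightarrow> y \<bullet> (A *v y) \<le> x0 \<bullet> (A *v x0)"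
      by blast
    define l where "l = x0 \<bullet> (A *v x0)"
    have x0V: "x0 \<in> V" and nx0: "norm x0 = 1" using x0 by (auto simp: K_def)
    have x0x0: "x0 \<bullet> x0 = 1" using nx0 by (simp add: norm_eq_1)
    have bound: "y \<bullet> (A *v y) \<le> l * (y \<bullet> y)" if "y \<in> V" for y
    proof (cases "y = 0")
      case True then show ?thesis by simp
    next
      case False
      let ?y = "(1 / norm y) *\<^sub>R y"
      have "?y \<in> K" unfolding K_def using that False less.prems(1) by (auto simp: subspace_scale)
      hence "?y \<bullet> (A *v ?y) \<le> l" using mx l_def by blast
      hence "(y \<bullet> (A *v y)) / (norm y)^2 \<le> l"
        by (simp add: matrix_vector_mult_scaleR power2_eq_square)
      hence "y \<bullet> (A *v y) \<le> l * (norm y)^2" using False by (simp add: field_simps)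
      then show ?thesis by (simp add: power2_norm_eq_inner)
    qed
    have orth: "y \<bullet> (l *\<^sub>R x0 - A *v x0) = 0" if yV: "y \<in> V" for y
    proof -
      have "0 \<le> (2 * (l * (x0 \<bullet> y) - y \<bullet> (A *v x0))) * t + (l * (y \<bullet> y) - y \<bullet> (A *v y)) * t^2" for t
      proof -
        have "x0 + t *\<^sub>R y \<in> V" using x0V yV less.prems(1)
          by (simp add: subspace_add subspace_scale)
        from bound[OF this]
        have le: "(x0 + t *\<^sub>R y) \<bullet> (A *v (x0 + t *\<^sub>R y)) \<le> l * ((x0 + t *\<^sub>R y) \<bullet> (x0 + t *\<^sub>R y))" .
        have e1: "(x0 + t *\<^sub>R y) \<bullet> (A *v (x0 + t *\<^sub>R y)) = l + 2 * t * (y \<bullet> (A *v x0)) + t^2 * (y \<bullet> (A *v y))"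
        proof -
          have h: "x0 \<bullet> (A *v y) = y \<bullet> (A *v x0)"
            using sym_inner[OF symA, of x0 y] by (simp add: inner_commute)
          show ?thesis
            by (simp add: l_def h algebra_simps inner_add_left inner_add_right power2_eq_square matrix_vector_right_distrib matrix_vector_mult_scaleR)
        qed
        have e2: "(x0 + t *\<^sub>R y) \<bullet> (x0 + t *\<^sub>R y) = 1 + 2 * t * (x0 \<bullet> y) + t^2 * (y \<bullet> y)"
        proof -
          show ?thesis using x0x0 by (simp add: inner_commute[of y x0] algebra_simps inner_add_left inner_add_right power2_eq_square)
        qed
        have "l + 2 * t * (y \<bullet> (A *v x0)) + t^2 * (y \<bullet> (A *v y)) \<le> l * (1 + 2 * t * (x0 \<bullet> y) + t^2 * (y \<bullet> y))"
          using le unfolding e1 e2 .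
        moreover have "(2 * (l * (x0 \<bullet> y) - y \<bullet> (A *v x0))) * t + (l * (y \<bullet> y) - y \<bullet> (A *v y)) * t^2
          = l * (1 + 2 * t * (x0 \<bullet> y) + t^2 * (y \<bullet> y)) - (l + 2 * t * (y \<bullet> (A *v x0)) + t^2 * (y \<bullet> (A *v y)))"
          by (simp add: algebra_simps)
        ultimately show ?thesis by linarith
      qed
      from quad_nonneg_zero[OF this] show ?thesis
        by (simp add: inner_diff_right inner_commute)
    qed
    have "l *\<^sub>R x0 - A *v x0 \<in> V" using x0V less.prems by (simp add: subspace_diff subspace_scale)
    from orth[OF this] have eig: "A *v x0 = l *\<^sub>R x0" by simp
    define V' where "V' = {y\<in>V. x0 \<bullet> y = 0}"
    have sV': "subspace V'" using less.prems(1) unfolding V'_def subspace_def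
      by (auto simp: inner_add_right)
    have iV': "\<forall>x\<in>V'. A *v x \<in> V'"
      using less.prems(2) eig sym_inner[OF symA, of x0, symmetric] unfolding V'_def by auto
    have "V' \<subseteq> V" unfolding V'_def by auto
    moreover have "x0 \<notin> V'" using x0x0 unfolding V'_def by auto
    ultimately have "V' \<subset> V" using x0V by blast
    hence "dim V' < dim V" using sV' less.prems(1)
      by (intro dim_psubset) (metis span_eq_iff)
    from less.hyps[OF this sV' iV'] obtain T where
      T: "finite T" "T \<subseteq> V'" "pairwise orthogonal T"
        "\<forall>v\<in>T. norm v = 1 \<and> A *v v = (v \<bullet> (A *v v)) *\<^sub>R v" "V' \<subseteq> span T" by blast
    show ?thesis
    proof (intro exI[of _ "insert x0 T"] conjI)
      show "finite (insert x0 T)" using T by simp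
      show "insert x0 T \<subseteq> V" using T x0V unfolding V'_def by auto
      show "pairwise orthogonal (insert x0 T)"
        using T unfolding pairwise_insert V'_def orthogonal_def by (auto simp: inner_commute)
      show "\<forall>v\<in>insert x0 T. norm v = 1 \<and> A *v v = (v \<bullet> (A *v v)) *\<^sub>R v"
      proof -
        have eig': "A *v x0 = (x0 \<bullet> (A *v x0)) *\<^sub>R x0" using eig unfolding l_def .
        show ?thesis using T nx0 eig' by auto
      qed
      show "V \<subseteq> span (insert x0 T)"
      proof
        fix y assume yV: "y \<in> V"
        have "y - (x0 \<bullet> y) *\<^sub>R x0 \<in> V'" unfolding V'_def
          using yV x0V less.prems(1) x0x0 by (simp add: subspace_diff subspace_scale inner_diff_right)
        hence "y - (x0 \<bullet> y) *\<^sub>R x0 \<in> span (insert x0 T)" using T(5) span_mono[of T "insert x0 T"] by auto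
        moreover have "(x0 \<bullet> y) *\<^sub>R x0 \<in> span (insert x0 T)" by (simp add: span_base span_mul)
        ultimately have "(y - (x0 \<bullet> y) *\<^sub>R x0) + (x0 \<bullet> y) *\<^sub>R x0 \<in> span (insert x0 T)" by (rule span_add)
        thus "y \<in> span (insert x0 T)" by simp
      qed
    qed
  qed
qed

lemma mulv_sum: "(A::real^'n^'n) *v (\<Sum>i\<in>S. f i) = (\<Sum>i\<in>S. A *v f i)"
  by (induction S rule: infinite_finite_induct) (auto simp: matrix_vector_right_distrib)

lemma sum_mulv: "(\<Sum>i\<in>S. f i :: real^'n^'n) *v x = (\<Sum>i\<in>S. f i *v x)"
  by (induction S rule: infinite_finite_induct) (auto simp: matrix_vector_mult_add_rdistrib)

lemma scaleR_mulv: "(c *\<^sub>R (M::real^'n^'n)) *v x = c *\<^sub>R (M *v x)"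
  by (simp add: vec_eq_iff matrix_vector_mult_def sum_distrib_left mult.assoc)

lemma transpose_sum: "transpose (\<Sum>i\<in>S. f i :: real^'n^'n) = (\<Sum>i\<in>S. transpose (f i))"
  by (induction S rule: infinite_finite_induct) (auto simp: transpose_def vec_eq_iff)

lemma transpose_add: "transpose ((A::real^'n^'n) + B) = transpose A + transpose B"
  by (simp add: transpose_def vec_eq_iff)

lemma transpose_diff: "transpose ((A::real^'n^'n) - B) = transpose A - transpose B"
  by (simp add: transpose_def vec_eq_iff)

definition outer :: "real^'n \<Rightarrow> real^'n^'n" where
  "outer v = (\<chi> i j. v$i * v$j)"

lemma outer_mulv: "outer v *v x = (v \<bullet> x) *\<^sub>R v"
  by (simp add: outer_def vec_eq_iff matrix_vector_mult_def inner_vec_def sum_distrib_left mult_ac)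

lemma transpose_outer: "transpose (outer v) = outer v"
  by (simp add: outer_def transpose_def vec_eq_iff mult.commute)

lemma spectral:
  fixes A :: "real^'n^'n"
  assumes symA: "transpose A = A"
  obtains T where "finite T" "pairwise orthogonal T"
    "\<And>v. v\<in>T \<Longrightarrow> norm v = 1" "\<And>v. v\<in>T \<Longrightarrow> A *v v = (v \<bullet> (A *v v)) *\<^sub>R v"
    "\<And>x. (\<Sum>v\<in>T. (x \<bullet> v) *\<^sub>R v) = x"
proof -
  from spectral_subspace[OF symA, of UNIV] obtain T where
    T: "finite T" "pairwise orthogonal T" "\<forall>v\<in>T. norm v = 1 \<and> A *v v = (v \<bullet> (A *v v)) *\<^sub>R v"
       "UNIV \<subseteq> span T" by auto
  show ?thesis
  proof (rule that[OF T(1,2)])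
    show "\<And>v. v\<in>T \<Longrightarrow> norm v = 1" "\<And>v. v\<in>T \<Longrightarrow> A *v v = (v \<bullet> (A *v v)) *\<^sub>R v" using T(3) by auto
    show "(\<Sum>v\<in>T. (x \<bullet> v) *\<^sub>R v) = x" for x
      using T by (intro orthonormal_basis_expand) auto
  qed
qed

lemma orthonormal_inner:
  assumes "pairwise orthogonal T" "\<And>v. v\<in>T \<Longrightarrow> norm v = 1" "v \<in> T" "w \<in> T"
  shows "v \<bullet> w = (if v = w then 1 else 0)"
  using assms by (auto simp: pairwise_def orthogonal_def norm_eq_1)

lemma psd_kernel:
  fixes M :: "real^'n^'n"
  assumes "psd M" "x \<bullet> (M *v x) = 0"
  shows "M *v x = 0"
proof -
  have symM: "transpose M = M" using assms(1) by (simp add: psd_def)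
  have "y \<bullet> (M *v x) = 0" for y
  proof -
    have "0 \<le> (2 * (y \<bullet> (M *v x))) * t + (y \<bullet> (M *v y)) * t^2" for t
    proof -
      have "0 \<le> (x + t *\<^sub>R y) \<bullet> (M *v (x + t *\<^sub>R y))" using assms(1) by (simp add: psd_def)
      also have "\<dots> = (2 * (y \<bullet> (M *v x))) * t + (y \<bullet> (M *v y)) * t^2"
      proof -
        have h: "x \<bullet> (M *v y) = y \<bullet> (M *v x)"
          using sym_inner[OF symM, of y x] by (simp add: inner_commute)
        show ?thesis using assms(2)
          by (simp add: h algebra_simps inner_add_left inner_add_right power2_eq_square matrix_vector_right_distrib matrix_vector_mult_scaleR)
      qed
      finally show ?thesis .
    qed
    from quad_nonneg_zero[OF this] show ?thesis by simp
  qed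
  from this[of "M *v x"] show ?thesis by simp
qed

lemma psd_sqrt_exists:
  fixes A :: "real^'n^'n"
  assumes "psd A"
  shows "\<exists>B. psd B \<and> B ** B = A"
proof -
  have symA: "transpose A = A" using assms by (simp add: psd_def)
  obtain T where T: "finite T" "pairwise orthogonal T"
    "\<And>v. v\<in>T \<Longrightarrow> norm v = 1" "\<And>v. v\<in>T \<Longrightarrow> A *v v = (v \<bullet> (A *v v)) *\<^sub>R v"
    "\<And>x. (\<Sum>v\<in>T. (x \<bullet> v) *\<^sub>R v) = x"
    using spectral[OF symA] by blast
  define l where "l v = v \<bullet> (A *v v)" for v
  have l0: "0 \<le> l v" for v using assms by (simp add: l_def psd_def)
  define B where "B = (\<Sum>v\<in>T. sqrt (l v) *\<^sub>R outer v)"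
  have Bx: "B *v x = (\<Sum>v\<in>T. (sqrt (l v) * (v \<bullet> x)) *\<^sub>R v)" for x
    unfolding B_def sum_mulv scaleR_mulv outer_mulv by simp
  have Bw: "B *v w = sqrt (l w) *\<^sub>R w" if w: "w \<in> T" for w
  proof -
    have "B *v w = (\<Sum>v\<in>T. if v = w then sqrt (l v) *\<^sub>R v else 0)"
      unfolding Bx using orthonormal_inner[OF T(2,3) _ w] by (intro sum.cong) auto
    also have "\<dots> = sqrt (l w) *\<^sub>R w"
      using T(1) w by (simp add: sum.delta')
    finally show ?thesis .
  qed
  have Av: "A *v v = l v *\<^sub>R v" if "v \<in> T" for v using T(4)[OF that] by (simp add: l_def)
  have "(B ** B) *v x = A *v x" for x
  proof -
    have "(B ** B) *v x = B *v (B *v x)" by (simp add: matrix_vector_mul_assoc)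
    also have "\<dots> = (\<Sum>v\<in>T. (sqrt (l v) * (v \<bullet> x)) *\<^sub>R (B *v v))"
      by (subst Bx[of x]) (simp add: mulv_sum matrix_vector_mult_scaleR)
    also have "\<dots> = (\<Sum>v\<in>T. (x \<bullet> v) *\<^sub>R (A *v v))"
      using l0 by (intro sum.cong) (auto simp: Bw Av inner_commute)
    also have "\<dots> = A *v (\<Sum>v\<in>T. (x \<bullet> v) *\<^sub>R v)"
      unfolding mulv_sum by (simp add: matrix_vector_mult_scaleR)
    also have "\<dots> = A *v x" using T(5) by simp
    finally show ?thesis .
  qed
  hence BB: "B ** B = A" by (simp add: matrix_eq)
  have "transpose B = B" unfolding B_def transpose_sum by (simp add: transpose_scalar transpose_outer)
  moreover have "0 \<le> x \<bullet> (B *v x)" for x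
  proof -
    have "x \<bullet> (B *v x) = (\<Sum>v\<in>T. sqrt (l v) * (v \<bullet> x)^2)"
      unfolding Bx by (simp add: inner_sum_right power2_eq_square inner_commute mult_ac)
    also have "\<dots> \<ge> 0" using l0 by (intro sum_nonneg) auto
    finally show ?thesis .
  qed
  ultimately have "psd B" by (simp add: psd_def)
  with BB show ?thesis by blast
qed

lemma mm_add_r: "((A::real^'n^'n) + B) ** C = A ** C + B ** C"
  by (simp add: vec_eq_iff matrix_matrix_mult_def sum.distrib distrib_right)

lemma mm_diff_r: "((A::real^'n^'n) - B) ** C = A ** C - B ** C"
  by (simp add: vec_eq_iff matrix_matrix_mult_def sum_subtractf left_diff_distrib)

lemma mm_diff_l: "(A::real^'n^'n) ** (B - C) = A ** B - A ** C"
  by (simp add: vec_eq_iff matrix_matrix_mult_def sum_subtractf right_diff_distrib)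

lemma mm_scale_l: "(c *\<^sub>R (A::real^'n^'n)) ** B = c *\<^sub>R (A ** B)"
  by (simp add: scalar_matrix_assoc)

lemma mm_scale_r: "(A::real^'n^'n) ** (c *\<^sub>R B) = c *\<^sub>R (A ** B)"
  by (simp add: vec_eq_iff matrix_matrix_mult_def sum_distrib_left mult_ac)

lemma psd_sq:
  fixes B :: "real^'n^'n"
  assumes "psd B"
  shows "psd (B ** B)"
proof -
  have symB: "transpose B = B" using assms by (simp add: psd_def)
  have "x \<bullet> ((B ** B) *v x) = (B *v x) \<bullet> (B *v x)" for x
    using sym_inner[OF symB, of x "B *v x"] by (simp add: matrix_vector_mul_assoc)
  thus ?thesis using symB by (simp add: psd_def matrix_transpose_mul)
qed

lemma psd_sqrt_unique:
  fixes B C :: "real^'n^'n"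
  assumes B: "psd B" and C: "psd C" and BC: "B ** B = C ** C"
  shows "B = C"
proof -
  define D where "D = B - C"
  have symB: "transpose B = B" and symC: "transpose C = C" using B C by (auto simp: psd_def)
  have symD: "transpose D = D" unfolding D_def by (simp add: transpose_diff symB symC)
  obtain T where T: "finite T" "pairwise orthogonal T"
    "\<And>v. v\<in>T \<Longrightarrow> norm v = 1" "\<And>v. v\<in>T \<Longrightarrow> D *v v = (v \<bullet> (D *v v)) *\<^sub>R v"
    "\<And>x. (\<Sum>v\<in>T. (x \<bullet> v) *\<^sub>R v) = x"
    using spectral[OF symD] by blast
  have Dv: "D *v v = 0" if v: "v \<in> T" for v
  proof -
    define m where "m = v \<bullet> (D *v v)"
    have eig: "D *v v = m *\<^sub>R v" using T(4)[OF v] by (simp add: m_def)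
    have vv: "v \<bullet> v = 1" using T(3)[OF v] by (simp add: norm_eq_1)
    have "D ** (B + C) + (B + C) ** D = 2 *\<^sub>R (B ** B - C ** C)"
      unfolding D_def by (simp add: matrix_add_ldistrib mm_add_r mm_diff_l
          mm_diff_r algebra_simps scaleR_2)
    hence "v \<bullet> ((D ** (B + C) + (B + C) ** D) *v v) = 0" using BC by simp
    moreover have "v \<bullet> ((D ** (B + C)) *v v) = m * (v \<bullet> ((B + C) *v v))"
    proof -
      have "v \<bullet> ((D ** (B + C)) *v v) = v \<bullet> (D *v ((B + C) *v v))"
        by (simp add: matrix_vector_mul_assoc)
      also have "\<dots> = (D *v v) \<bullet> ((B + C) *v v)" using sym_inner[OF symD] by simp
      also have "\<dots> = m * (v \<bullet> ((B + C) *v v))" by (simp add: eig)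
      finally show ?thesis .
    qed
    moreover have "v \<bullet> (((B + C) ** D) *v v) = m * (v \<bullet> ((B + C) *v v))"
      by (simp add: matrix_vector_mul_assoc[symmetric] eig matrix_vector_mult_scaleR)
    ultimately have "m * (v \<bullet> ((B + C) *v v)) = 0"
      by (simp add: matrix_vector_mult_add_rdistrib inner_add_right)
    moreover have "0 \<le> v \<bullet> (B *v v)" "0 \<le> v \<bullet> (C *v v)" using B C by (auto simp: psd_def)
    moreover have "m = v \<bullet> (B *v v) - v \<bullet> (C *v v)"
      unfolding m_def D_def by (simp add: matrix_vector_mult_diff_rdistrib inner_diff_right)
    ultimately have "m = 0"
      by (auto simp: matrix_vector_mult_add_rdistrib inner_add_right)
    thus ?thesis using eig by simp
  qed
  have "D *v x = 0" for x
  proof -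
    have "D *v x = D *v (\<Sum>v\<in>T. (x \<bullet> v) *\<^sub>R v)" using T(5) by simp
    also have "\<dots> = 0" unfolding mulv_sum by (simp add: matrix_vector_mult_scaleR Dv)
    finally show ?thesis .
  qed
  hence "D = 0" by (simp add: matrix_eq)
  thus ?thesis unfolding D_def by simp
qed

lemma msqrt:
  fixes A :: "real^'n^'n"
  assumes "psd A"
  shows "psd (msqrt A)" "msqrt A ** msqrt A = A"
proof -
  have "\<exists>!B. psd B \<and> B ** B = A"
    using psd_sqrt_exists[OF assms] psd_sqrt_unique by blast
  hence "psd (msqrt A) \<and> msqrt A ** msqrt A = A" unfolding msqrt_def by (rule theI')
  thus "psd (msqrt A)" "msqrt A ** msqrt A = A" by auto
qed

lemma msqrt_unique:
  fixes A B :: "real^'n^'n"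
  assumes "psd B" "B ** B = A"
  shows "msqrt A = B"
proof -
  have "psd A" using psd_sq[OF assms(1)] assms(2) by simp
  show ?thesis using msqrt[OF \<open>psd A\<close>] assms psd_sqrt_unique by metis
qed

lemma cont_mm[continuous_intros]:
  "continuous_on S f \<Longrightarrow> continuous_on S g \<Longrightarrow> continuous_on S (\<lambda>z. (f z :: real^'n^'n) ** g z)"
  unfolding matrix_matrix_mult_def by (intro continuous_intros)

lemma cont_mulv[continuous_intros]:
  "continuous_on S f \<Longrightarrow> continuous_on S g \<Longrightarrow> continuous_on S (\<lambda>z. (f z :: real^'n^'n) *v g z)"
  unfolding matrix_vector_mult_def by (intro continuous_intros)

lemma cont_transpose[continuous_intros]:
  "continuous_on S f \<Longrightarrow> continuous_on S (\<lambda>z. transpose (f z :: real^'n^'n))"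
  unfolding transpose_def by (intro continuous_intros)

lemma cont_trace[continuous_intros]:
  "continuous_on S f \<Longrightarrow> continuous_on S (\<lambda>z. trace (f z :: real^'n^'n))"
  unfolding trace_def by (intro continuous_intros)

lemma psd_set_eq: "psd_set = {A. transpose A = A} \<inter> (\<Inter>x. {A::real^'n^'n. 0 \<le> x \<bullet> (A *v x)})"
  by (auto simp: psd_set_def psd_def)

lemma closed_psd_set: "closed (psd_set :: (real^'n^'n) set)"
  unfolding psd_set_eq
  by (intro closed_Int closed_INT ballI closed_Collect_eq closed_Collect_le continuous_intros)

lemma norm_sq_trace:
  fixes B :: "real^'n^'n"
  assumes "transpose B = B"
  shows "(norm B)^2 = trace (B ** B)"
proof -
  have "(norm B)^2 = (\<Sum>i\<in>UNIV. (norm (B$i))^2)"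
    by (simp add: norm_vec_def L2_set_def sum_nonneg)
  also have "\<dots> = (\<Sum>i\<in>UNIV. \<Sum>j\<in>UNIV. (B$i$j)^2)"
    by (simp add: norm_vec_def L2_set_def sum_nonneg)
  also have "\<dots> = (\<Sum>i\<in>UNIV. \<Sum>j\<in>UNIV. B$i$j * B$j$i)"
  proof -
    have "B$j$i = B$i$j" for i j using arg_cong[OF assms, of "\<lambda>M. M$i$j"] by (simp add: transpose_def)
    thus ?thesis by (simp add: power2_eq_square)
  qed
  also have "\<dots> = trace (B ** B)" by (simp add: trace_def matrix_matrix_mult_def)
  finally show ?thesis .
qed

lemma trace_le_norm: "trace (A::real^'n^'n) \<le> real CARD('n) * norm A"
proof -
  have "trace A \<le> (\<Sum>i\<in>(UNIV::'n set). norm A)"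
    unfolding trace_def
  proof (rule sum_mono)
    fix i :: 'n
    have "A$i$i \<le> \<bar>A$i$i\<bar>" by simp
    also have "\<dots> \<le> norm (A$i)" by (rule component_le_norm_cart)
    also have "\<dots> \<le> norm A" by (rule Finite_Cartesian_Product.norm_nth_le)
    finally show "A$i$i \<le> norm A" .
  qed
  thus ?thesis by simp
qed

lemma msqrt_norm:
  fixes A :: "real^'n^'n"
  assumes "psd A"
  shows "(norm (msqrt A))^2 \<le> real CARD('n) * norm A"
proof -
  have "transpose (msqrt A) = msqrt A" using msqrt(1)[OF assms] by (simp add: psd_def)
  from norm_sq_trace[OF this] msqrt(2)[OF assms] trace_le_norm[of A] show ?thesis by simp
qed

lemma continuous_on_msqrt_cball:
  fixes r :: real
  shows "continuous_on (psd_set \<inter> cball 0 r) (msqrt :: real^'n^'n \<Rightarrow> _)"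
proof -
  define S where "S = psd_set \<inter> cball (0::real^'n^'n) r"
  define T where "T = psd_set \<inter> cball (0::real^'n^'n) (sqrt (real CARD('n) * \<bar>r\<bar>))"
  have "continuous_on S msqrt"
  proof (rule continuous_from_closed_graph)
    show "compact T" unfolding T_def
      by (rule closed_Int_compact[OF closed_psd_set compact_cball])
    show "msqrt \<in> S \<rightarrow> T"
    proof
      fix A assume A: "A \<in> S"
      hence pA: "psd A" and nA: "norm A \<le> r" by (auto simp: S_def psd_set_def)
      have "(norm (msqrt A))^2 \<le> real CARD('n) * \<bar>r\<bar>"
        using msqrt_norm[OF pA] nA by (smt (verit) mult_left_mono of_nat_0_le_iff)
      hence "norm (msqrt A) \<le> sqrt (real CARD('n) * \<bar>r\<bar>)"
        using real_le_rsqrt by blast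
      thus "msqrt A \<in> T" using msqrt(1)[OF pA] by (simp add: T_def psd_set_def)
    qed
    have "(\<lambda>x. (x, msqrt x)) ` S = (S \<times> psd_set) \<inter> {p. snd p ** snd p = fst p}"
    proof safe
      fix A assume "A \<in> S"
      hence pA: "psd A" by (auto simp: S_def psd_set_def)
      show "msqrt A \<in> psd_set" "snd (A, msqrt A) ** snd (A, msqrt A) = fst (A, msqrt A)"
        using msqrt[OF pA] by (auto simp: psd_set_def)
    next
      fix A B assume "A \<in> S" "B \<in> psd_set" "snd (A, B) ** snd (A, B) = fst (A, B)"
      hence "msqrt A = B" using msqrt_unique by (auto simp: psd_set_def)
      thus "(A, B) \<in> (\<lambda>x. (x, msqrt x)) ` S" using \<open>A \<in> S\<close> by auto
    qed
    moreover have "closed ((S \<times> psd_set) \<inter> {p. snd p ** snd p = fst p})"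
      unfolding S_def
      by (intro closed_Int closed_Times closed_psd_set closed_cball closed_Collect_eq continuous_intros)
    ultimately show "closed ((\<lambda>x. (x, msqrt x)) ` S)" by simp
  qed
  thus ?thesis by (simp add: S_def)
qed

lemma continuous_on_msqrt: "continuous_on psd_set (msqrt :: real^'n^'n \<Rightarrow> _)"
  unfolding continuous_on_eq_continuous_within
proof
  fix A :: "real^'n^'n" assume "A \<in> psd_set"
  define r where "r = norm A + 1"
  have "continuous (at A within (psd_set \<inter> cball 0 r)) msqrt"
    using continuous_on_msqrt_cball[of r] \<open>A \<in> psd_set\<close> unfolding continuous_on_eq_continuous_within r_def
    by auto
  moreover have "at A within (psd_set \<inter> cball 0 r) = at A within psd_set"
    by (rule at_within_nhd[of _ "ball 0 r"]) (auto simp: r_def)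
  ultimately show "continuous (at A within psd_set) msqrt" by simp
qed

lemma trace_scaleR: "trace (c *\<^sub>R (A::real^'n^'n)) = c * trace A"
  by (simp add: trace_def sum_distrib_left)

lemma trace_tt_nonneg: "0 \<le> trace (transpose (E::real^'n^'n) ** E)"
  by (simp add: trace_def matrix_matrix_mult_def transpose_def sum_nonneg)

lemma inv_ker:
  fixes A :: "real^'n^'n"
  assumes "\<And>x. A *v x = 0 \<Longrightarrow> x = 0"
  shows "invertible A"
  using assms matrix_left_invertible_ker invertible_left_inverse by blast

lemma invertible_ker:
  fixes A :: "real^'n^'n"
  assumes "invertible A" "A *v x = 0"
  shows "x = 0"
  using inj_matrix_vector_mult[OF assms(1)] assms(2) by (metis injD matrix_vector_mult_0_right)

lemma psd_add: "psd A \<Longrightarrow> psd B \<Longrightarrow> psd ((A::real^'n^'n) + B)"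
  by (simp add: psd_def transpose_add matrix_vector_mult_add_rdistrib inner_add_right)

lemma psd_scale: "psd A \<Longrightarrow> 0 \<le> c \<Longrightarrow> psd (c *\<^sub>R (A::real^'n^'n))"
  by (simp add: psd_def transpose_scalar scaleR_mulv)

lemma psd_id: "0 \<le> c \<Longrightarrow> psd (c *\<^sub>R mat 1 :: real^'n^'n)"
  by (simp add: psd_def transpose_scalar scaleR_mulv)

lemma psd_eps:
  fixes A :: "real^'n^'n"
  assumes "psd A" "e > 0"
  shows "psd (A + e *\<^sub>R mat 1)" "invertible (A + e *\<^sub>R mat 1)"
proof -
  show "psd (A + e *\<^sub>R mat 1)" using assms by (intro psd_add psd_id) auto
  show "invertible (A + e *\<^sub>R mat 1)"
  proof (rule inv_ker)
    fix x assume "(A + e *\<^sub>R mat 1) *v x = 0"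
    hence "x \<bullet> (A *v x) + e * (x \<bullet> x) = 0"
      by (metis inner_zero_right matrix_vector_mult_add_rdistrib inner_add_right scaleR_mulv matrix_vector_mul_lid inner_scaleR_right)
    moreover have "0 \<le> x \<bullet> (A *v x)" using assms by (simp add: psd_def)
    ultimately have "x \<bullet> x = 0" using assms(2)
      by (smt (verit) inner_ge_zero mult_pos_pos)
    thus "x = 0" by simp
  qed
qed

lemma psd_congr:
  fixes A R :: "real^'n^'n"
  assumes "psd A" "transpose R = R"
  shows "psd (R ** A ** R)"
proof -
  have symA: "transpose A = A" using assms by (simp add: psd_def)
  have "x \<bullet> ((R ** A ** R) *v x) = (R *v x) \<bullet> (A *v (R *v x))" for x
    using sym_inner[OF assms(2), of x "A *v (R *v x)"] by (simp add: matrix_vector_mul_assoc matrix_mul_assoc)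
  thus ?thesis using assms symA by (simp add: psd_def matrix_transpose_mul matrix_mul_assoc)
qed

lemma inv_sym:
  fixes X Y :: "real^'n^'n"
  assumes "transpose X = X" "X ** Y = mat 1" "Y ** X = mat 1"
  shows "transpose Y = Y"
proof -
  have "transpose Y = transpose Y ** (X ** Y)" using assms by simp
  also have "\<dots> = transpose (X ** Y) ** Y"
    by (simp add: matrix_mul_assoc matrix_transpose_mul assms(1))
  also have "\<dots> = Y" using assms by simp
  finally show ?thesis .
qed

lemma inv_psd:
  fixes X Y :: "real^'n^'n"
  assumes "psd X" "X ** Y = mat 1" "Y ** X = mat 1"
  shows "psd Y"
proof -
  have sX: "transpose X = X" using assms by (simp add: psd_def)
  have "0 \<le> x \<bullet> (Y *v x)" for x
  proof -
    have "x = X *v (Y *v x)" using assms(2) by (simp add: matrix_vector_mul_assoc)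
    hence "x \<bullet> (Y *v x) = (X *v (Y *v x)) \<bullet> (Y *v x)" by simp
    also have "\<dots> = (Y *v x) \<bullet> (X *v (Y *v x))" by (rule inner_commute)
    finally show ?thesis using assms(1) by (simp add: psd_def)
  qed
  thus ?thesis using inv_sym[OF sX assms(2,3)] by (simp add: psd_def)
qed

lemma msqrt_invertible:
  fixes A :: "real^'n^'n"
  assumes "psd A" "invertible A"
  shows "invertible (msqrt A)"
proof (rule inv_ker)
  fix x assume "msqrt A *v x = 0"
  hence "A *v x = 0" using msqrt(2)[OF assms(1)] by (metis matrix_vector_mul_assoc matrix_vector_mult_0_right)
  thus "x = 0" using invertible_ker[OF assms(2)] by blast
qed

definition FF :: "real^'n^'n \<Rightarrow> real^'n^'n \<Rightarrow> real" where
  "FF A B = trace (msqrt (msqrt B ** A ** msqrt B))"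

lemma trace_cyc3: "trace ((P::real^'n^'n) ** Q ** W) = trace (Q ** W ** P)"
  by (metis matrix_mul_assoc trace_mul_sym)

lemma FF_upper:
  fixes A B X Y :: "real^'n^'n"
  assumes A: "psd A" and B: "psd B" "invertible B"
    and sX: "transpose X = X" and sY: "transpose Y = Y" and XY: "X ** Y = mat 1" and YX: "Y ** X = mat 1"
  shows "2 * FF A B \<le> trace (X ** A ** X) + trace (Y ** B ** Y)"
proof -
  define R where "R = msqrt B"
  have pR: "psd R" and RR: "R ** R = B" using msqrt[OF B(1)] by (auto simp: R_def)
  have sR: "transpose R = R" using pR by (simp add: psd_def)
  have "invertible R" unfolding R_def by (rule msqrt_invertible[OF B])
  then obtain Ri where RRi: "R ** Ri = mat 1" and RiR: "Ri ** R = mat 1" unfolding invertible_def by blast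
  have sRi: "transpose Ri = Ri" using inv_sym[OF sR RRi RiR] .
  define S where "S = msqrt (R ** A ** R)"
  have pM: "psd (R ** A ** R)" using psd_congr[OF A sR] .
  have pS: "psd S" and SS: "S ** S = R ** A ** R" using msqrt[OF pM] by (auto simp: S_def)
  have sS: "transpose S = S" using pS by (simp add: psd_def)
  have FFe: "FF A B = trace S" by (simp add: FF_def S_def R_def)
  have key: "Ri ** S ** S ** Ri = A"
  proof -
    have "Ri ** S ** S ** Ri = Ri ** (S ** S) ** Ri" by (simp add: matrix_mul_assoc)
    also have "\<dots> = (Ri ** R) ** A ** (R ** Ri)" by (simp add: SS matrix_mul_assoc)
    also have "\<dots> = A" by (simp add: RRi RiR)
    finally show ?thesis .
  qed
  define E where "E = S ** Ri ** X - R ** Y"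
  have tE: "transpose E = X ** Ri ** S - Y ** R"
    unfolding E_def by (simp add: transpose_diff matrix_transpose_mul sX sY sR sRi sS matrix_mul_assoc)
  have EE: "transpose E ** E = ((X ** Ri ** S) ** (S ** Ri ** X) - (X ** Ri ** S) ** (R ** Y))
       - ((Y ** R) ** (S ** Ri ** X) - (Y ** R) ** (R ** Y))"
    unfolding tE by (simp add: E_def mm_diff_l mm_diff_r)
  have t1: "trace ((X ** Ri ** S) ** (S ** Ri ** X)) = trace (X ** A ** X)"
  proof -
    have "(X ** Ri ** S) ** (S ** Ri ** X) = X ** (Ri ** S ** S ** Ri) ** X" by (simp add: matrix_mul_assoc)
    thus ?thesis by (simp add: key)
  qed
  have t2: "trace ((X ** Ri ** S) ** (R ** Y)) = trace S"
  proof -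
    have "trace ((X ** Ri ** S) ** (R ** Y)) = trace (X ** (Ri ** S ** R ** Y))" by (simp add: matrix_mul_assoc)
    also have "\<dots> = trace ((Ri ** S ** R ** Y) ** X)" by (rule trace_mul_sym)
    also have "\<dots> = trace ((Ri ** S ** R) ** (Y ** X))" by (simp add: matrix_mul_assoc)
    also have "\<dots> = trace (Ri ** (S ** R))" by (simp add: YX matrix_mul_assoc)
    also have "\<dots> = trace ((S ** R) ** Ri)" by (rule trace_mul_sym)
    also have "\<dots> = trace (S ** (R ** Ri))" by (simp add: matrix_mul_assoc)
    also have "\<dots> = trace S" by (simp add: RRi)
    finally show ?thesis .
  qed
  have t3: "trace ((Y ** R) ** (S ** Ri ** X)) = trace S"
  proof -
    have "trace ((Y ** R) ** (S ** Ri ** X)) = trace (Y ** (R ** S ** Ri ** X))" by (simp add: matrix_mul_assoc)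
    also have "\<dots> = trace ((R ** S ** Ri ** X) ** Y)" by (rule trace_mul_sym)
    also have "\<dots> = trace ((R ** S ** Ri) ** (X ** Y))" by (simp add: matrix_mul_assoc)
    also have "\<dots> = trace ((R ** S) ** Ri)" by (simp add: XY)
    also have "\<dots> = trace (Ri ** (R ** S))" by (rule trace_mul_sym)
    also have "\<dots> = trace ((Ri ** R) ** S)" by (simp add: matrix_mul_assoc)
    also have "\<dots> = trace S" by (simp add: RiR)
    finally show ?thesis .
  qed
  have t4: "trace ((Y ** R) ** (R ** Y)) = trace (Y ** B ** Y)"
  proof -
    have "(Y ** R) ** (R ** Y) = Y ** (R ** R) ** Y" by (simp add: matrix_mul_assoc)
    thus ?thesis by (simp add: RR)
  qed
  have "0 \<le> trace (transpose E ** E)" by (rule trace_tt_nonneg)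
  also have "trace (transpose E ** E) = trace (X ** A ** X) + trace (Y ** B ** Y) - 2 * trace S"
    unfolding EE trace_sub t1 t2 t3 t4 by simp
  finally show ?thesis using FFe by simp
qed

lemma FF_attained:
  fixes A B :: "real^'n^'n"
  assumes A: "psd A" "invertible A" and B: "psd B" "invertible B"
  shows "\<exists>X Y. transpose X = X \<and> transpose Y = Y \<and> X ** Y = mat 1 \<and> Y ** X = mat 1 \<and>
    trace (X ** A ** X) + trace (Y ** B ** Y) = 2 * FF A B"
proof -
  define R where "R = msqrt B"
  have pR: "psd R" and RR: "R ** R = B" using msqrt[OF B(1)] by (auto simp: R_def)
  have sR: "transpose R = R" using pR by (simp add: psd_def)
  have iR: "invertible R" unfolding R_def by (rule msqrt_invertible[OF B])
  then obtain Ri where RRi: "R ** Ri = mat 1" and RiR: "Ri ** R = mat 1" unfolding invertible_def by blast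
  have sRi: "transpose Ri = Ri" using inv_sym[OF sR RRi RiR] .
  define S where "S = msqrt (R ** A ** R)"
  have pM: "psd (R ** A ** R)" using psd_congr[OF A(1) sR] .
  have iM: "invertible (R ** A ** R)" using iR A(2) by (simp add: invertible_mult)
  have pS: "psd S" and SS: "S ** S = R ** A ** R" using msqrt[OF pM] by (auto simp: S_def)
  have sS: "transpose S = S" using pS by (simp add: psd_def)
  have iS: "invertible S" unfolding S_def by (rule msqrt_invertible[OF pM iM])
  then obtain Si where SSi: "S ** Si = mat 1" and SiS: "Si ** S = mat 1" unfolding invertible_def by blast
  have pSi: "psd Si" using inv_psd[OF pS SSi SiS] .
  have FFe: "FF A B = trace S" by (simp add: FF_def S_def R_def)
  define Z where "Z = R ** Si ** R"
  have pZ: "psd Z" unfolding Z_def by (rule psd_congr[OF pSi sR])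
  have iSi: "invertible Si" using SSi SiS unfolding invertible_def by blast
  have iZ: "invertible Z" unfolding Z_def using iR iSi by (simp add: invertible_mult)
  define X where "X = msqrt Z"
  have pX: "psd X" and XX: "X ** X = Z" using msqrt[OF pZ] by (auto simp: X_def)
  have sX: "transpose X = X" using pX by (simp add: psd_def)
  have "invertible X" unfolding X_def by (rule msqrt_invertible[OF pZ iZ])
  then obtain Y where XY: "X ** Y = mat 1" and YX: "Y ** X = mat 1" unfolding invertible_def by blast
  have sY: "transpose Y = Y" using inv_sym[OF sX XY YX] .
  have YY: "Y ** Y = Ri ** S ** Ri"
  proof -
    have ZW: "Z ** (Ri ** S ** Ri) = mat 1"
    proof -
      have "Z ** (Ri ** S ** Ri) = R ** Si ** (R ** Ri) ** S ** Ri" by (simp add: Z_def matrix_mul_assoc)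
      also have "\<dots> = R ** (Si ** S) ** Ri" by (simp add: RRi matrix_mul_assoc)
      also have "\<dots> = mat 1" by (simp add: SiS RRi)
      finally show ?thesis .
    qed
    have "Y ** Y ** Z = mat 1"
    proof -
      have "Y ** Y ** Z = Y ** (Y ** X) ** X" by (simp add: XX[symmetric] matrix_mul_assoc)
      also have "\<dots> = mat 1" by (simp add: YX)
      finally show ?thesis .
    qed
    hence "Y ** Y = Y ** Y ** (Z ** (Ri ** S ** Ri))" by (simp add: ZW)
    also have "\<dots> = (Y ** Y ** Z) ** (Ri ** S ** Ri)" by (simp add: matrix_mul_assoc)
    also have "\<dots> = Ri ** S ** Ri" using \<open>Y ** Y ** Z = mat 1\<close> by simp
    finally show ?thesis .
  qed
  have t1: "trace (X ** A ** X) = trace S"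
  proof -
    have "trace (X ** A ** X) = trace ((A ** X) ** X)" by (metis trace_mul_sym matrix_mul_assoc)
    also have "\<dots> = trace (A ** R ** (Si ** R))" by (simp add: matrix_mul_assoc[symmetric] XX Z_def)
    also have "\<dots> = trace ((Si ** R) ** (A ** R))" by (rule trace_mul_sym)
    also have "\<dots> = trace (Si ** (R ** A ** R))" by (simp add: matrix_mul_assoc)
    also have "\<dots> = trace (Si ** (S ** S))" by (simp only: SS)
    also have "\<dots> = trace ((Si ** S) ** S)" by (simp only: matrix_mul_assoc)
    also have "\<dots> = trace S" by (simp add: SiS)
    finally show ?thesis .
  qed
  have t2: "trace (Y ** B ** Y) = trace S"
  proof -
    have "trace (Y ** B ** Y) = trace ((B ** Y) ** Y)" by (metis trace_mul_sym matrix_mul_assoc)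
    also have "\<dots> = trace (R ** R ** Ri ** (S ** Ri))" by (simp add: matrix_mul_assoc[symmetric] YY RR[symmetric])
    also have "\<dots> = trace (R ** (S ** Ri))" by (simp add: RRi matrix_mul_assoc[symmetric])
    also have "\<dots> = trace ((S ** Ri) ** R)" by (rule trace_mul_sym)
    also have "\<dots> = trace S" by (simp add: RiR matrix_mul_assoc[symmetric])
    finally show ?thesis .
  qed
  show ?thesis
    by (rule exI[of _ X], rule exI[of _ Y]) (simp add: sX sY XY YX t1 t2 FFe)
qed

lemma trace_combo:
  fixes X A1 A2 :: "real^'n^'n"
  shows "trace (X ** (u *\<^sub>R A1 + v *\<^sub>R A2) ** X) = u * trace (X ** A1 ** X) + v * trace (X ** A2 ** X)"
  by (simp add: matrix_add_ldistrib mm_add_r mm_scale_l mm_scale_r trace_add trace_scaleR)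

lemma FF_concave_pd:
  fixes A1 A2 B1 B2 :: "real^'n^'n"
  assumes "psd A1" "psd A2" "psd B1" "psd B2" "invertible B1" "invertible B2"
    and "u \<ge> 0" "v \<ge> 0"
    and "psd (u *\<^sub>R A1 + v *\<^sub>R A2)" "invertible (u *\<^sub>R A1 + v *\<^sub>R A2)"
    and "psd (u *\<^sub>R B1 + v *\<^sub>R B2)" "invertible (u *\<^sub>R B1 + v *\<^sub>R B2)"
  shows "u * FF A1 B1 + v * FF A2 B2 \<le> FF (u *\<^sub>R A1 + v *\<^sub>R A2) (u *\<^sub>R B1 + v *\<^sub>R B2)"
proof -
  obtain X Y where XY: "transpose X = X" "transpose Y = Y" "X ** Y = mat 1" "Y ** X = mat 1"
    and eq: "trace (X ** (u *\<^sub>R A1 + v *\<^sub>R A2) ** X) + trace (Y ** (u *\<^sub>R B1 + v *\<^sub>R B2) ** Y)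
       = 2 * FF (u *\<^sub>R A1 + v *\<^sub>R A2) (u *\<^sub>R B1 + v *\<^sub>R B2)"
    using FF_attained[OF assms(9,10,11,12)] by blast
  have 1: "2 * FF A1 B1 \<le> trace (X ** A1 ** X) + trace (Y ** B1 ** Y)"
    using FF_upper[OF assms(1,3,5) XY] .
  have 2: "2 * FF A2 B2 \<le> trace (X ** A2 ** X) + trace (Y ** B2 ** Y)"
    using FF_upper[OF assms(2,4,6) XY] .
  have "u * (2 * FF A1 B1) + v * (2 * FF A2 B2) \<le>
     u * (trace (X ** A1 ** X) + trace (Y ** B1 ** Y)) + v * (trace (X ** A2 ** X) + trace (Y ** B2 ** Y))"
    using 1 2 assms(7,8) by (intro add_mono mult_left_mono) auto
  also have "\<dots> = 2 * FF (u *\<^sub>R A1 + v *\<^sub>R A2) (u *\<^sub>R B1 + v *\<^sub>R B2)"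
    using eq unfolding trace_combo by (simp add: algebra_simps)
  finally show ?thesis by simp
qed

lemma continuous_on_FF:
  "continuous_on (psd_set \<times> psd_set) (\<lambda>p. FF (fst p) (snd p :: real^'n^'n))"
proof -
  have c1: "continuous_on (psd_set \<times> psd_set) (\<lambda>p. msqrt (snd p :: real^'n^'n))"
    by (rule continuous_on_compose2[OF continuous_on_msqrt continuous_on_snd[OF continuous_on_id]]) auto
  have c2: "continuous_on (psd_set \<times> psd_set) (\<lambda>p. msqrt (snd p) ** fst p ** msqrt (snd p :: real^'n^'n))"
    by (intro cont_mm c1 continuous_on_fst continuous_on_id)
  have im: "(\<lambda>p. msqrt (snd p) ** fst p ** msqrt (snd p :: real^'n^'n)) ` (psd_set \<times> psd_set) \<subseteq> psd_set"
  proof clarify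
    fix A B :: "real^'n^'n" assume "A \<in> psd_set" "B \<in> psd_set"
    hence "psd A" "psd B" by (auto simp: psd_set_def)
    moreover have "transpose (msqrt B) = msqrt B" using msqrt(1)[OF \<open>psd B\<close>] by (simp add: psd_def)
    ultimately show "msqrt (snd (A, B)) ** fst (A, B) ** msqrt (snd (A, B)) \<in> psd_set"
      using psd_congr by (auto simp: psd_set_def)
  qed
  have "continuous_on (psd_set \<times> psd_set) (\<lambda>p. msqrt (msqrt (snd p) ** fst p ** msqrt (snd p :: real^'n^'n)))"
    by (rule continuous_on_compose2[OF continuous_on_msqrt c2 im])
  hence "continuous_on (psd_set \<times> psd_set) (\<lambda>p. trace (msqrt (msqrt (snd p) ** fst p ** msqrt (snd p :: real^'n^'n))))"
    by (rule cont_trace)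
  thus ?thesis by (simp add: FF_def)
qed

lemma lim_eps:
  fixes A B :: "real^'n^'n"
  assumes "psd A" "psd B"
  shows "((\<lambda>e. FF (A + e *\<^sub>R mat 1) (B + e *\<^sub>R mat 1)) \<longlongrightarrow> FF A B) (at_right 0)"
proof -
  define c where "c e = (A + e *\<^sub>R mat 1, B + e *\<^sub>R mat 1)" for e :: real
  have cc: "continuous_on {0..} c" unfolding c_def by (intro continuous_intros)
  have ci: "c ` {0..} \<subseteq> psd_set \<times> psd_set"
    using assms by (auto simp: c_def psd_set_def intro!: psd_add psd_id)
  have "continuous_on {0..} (\<lambda>e. FF (fst (c e)) (snd (c e)))"
    by (rule continuous_on_compose2[OF continuous_on_FF cc ci])
  hence "((\<lambda>e. FF (fst (c e)) (snd (c e))) \<longlongrightarrow> FF (fst (c 0)) (snd (c 0))) (at 0 within {0..})"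
    unfolding continuous_on_def by auto
  hence "((\<lambda>e. FF (fst (c e)) (snd (c e))) \<longlongrightarrow> FF (fst (c 0)) (snd (c 0))) (at 0 within {0<..})"
    by (rule tendsto_within_subset) auto
  thus ?thesis by (simp add: c_def)
qed

lemma FF_le_trace:
  fixes A B :: "real^'n^'n"
  assumes "psd A" "psd B"
  shows "2 * FF A B \<le> trace A + trace B"
proof -
  have lim1: "((\<lambda>e. 2 * FF (A + e *\<^sub>R mat 1) (B + e *\<^sub>R mat 1)) \<longlongrightarrow> 2 * FF A B) (at_right 0)"
    by (intro tendsto_mult tendsto_const lim_eps assms)
  have lim2: "((\<lambda>e::real. trace (A + e *\<^sub>R mat 1) + trace (B + e *\<^sub>R mat 1)) \<longlongrightarrow> trace (A + 0 *\<^sub>R mat 1) + trace (B + 0 *\<^sub>R mat 1)) (at_right 0)"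
    unfolding trace_add trace_scaleR by (intro tendsto_intros)
  have ev: "\<forall>\<^sub>F e in at_right 0. 2 * FF (A + e *\<^sub>R mat 1) (B + e *\<^sub>R mat 1) \<le> trace (A + e *\<^sub>R mat 1) + trace (B + e *\<^sub>R mat 1)"
    using eventually_at_right_less[of "0::real"]
  proof eventually_elim
    case (elim e)
    have "2 * FF (A + e *\<^sub>R mat 1) (B + e *\<^sub>R mat 1) \<le> trace (mat 1 ** (A + e *\<^sub>R mat 1) ** mat 1) + trace (mat 1 ** (B + e *\<^sub>R mat 1) ** mat 1)"
      using psd_eps[OF assms(1) elim] psd_eps[OF assms(2) elim] by (intro FF_upper) auto
    thus ?case by simp
  qed
  have "2 * FF A B \<le> trace (A + 0 *\<^sub>R mat 1) + trace (B + 0 *\<^sub>R mat 1)"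
    by (rule tendsto_le[OF trivial_limit_at_right_real lim2 lim1 ev])
  thus ?thesis by simp
qed

lemma FF_concave:
  fixes A1 A2 B1 B2 :: "real^'n^'n"
  assumes "psd A1" "psd A2" "psd B1" "psd B2" "u \<ge> 0" "v \<ge> 0" "u + v = 1"
  shows "u * FF A1 B1 + v * FF A2 B2 \<le> FF (u *\<^sub>R A1 + v *\<^sub>R A2) (u *\<^sub>R B1 + v *\<^sub>R B2)"
proof -
  let ?A = "u *\<^sub>R A1 + v *\<^sub>R A2" and ?B = "u *\<^sub>R B1 + v *\<^sub>R B2"
  have pA: "psd ?A" "psd ?B" using assms by (auto intro!: psd_add psd_scale)
  have lim1: "((\<lambda>e. u * FF (A1 + e *\<^sub>R mat 1) (B1 + e *\<^sub>R mat 1) + v * FF (A2 + e *\<^sub>R mat 1) (B2 + e *\<^sub>R mat 1))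
     \<longlongrightarrow> u * FF A1 B1 + v * FF A2 B2) (at_right 0)"
    by (intro tendsto_add tendsto_mult tendsto_const lim_eps assms)
  have lim2: "((\<lambda>e. FF (?A + e *\<^sub>R mat 1) (?B + e *\<^sub>R mat 1)) \<longlongrightarrow> FF ?A ?B) (at_right 0)"
    by (rule lim_eps[OF pA])
  have ev: "\<forall>\<^sub>F e in at_right 0. u * FF (A1 + e *\<^sub>R mat 1) (B1 + e *\<^sub>R mat 1) + v * FF (A2 + e *\<^sub>R mat 1) (B2 + e *\<^sub>R mat 1)
      \<le> FF (?A + e *\<^sub>R mat 1) (?B + e *\<^sub>R mat 1)"
    using eventually_at_right_less[of "0::real"]
  proof eventually_elim
    case (elim e)
    have eqA: "?A + e *\<^sub>R mat 1 = u *\<^sub>R (A1 + e *\<^sub>R mat 1) + v *\<^sub>R (A2 + e *\<^sub>R mat 1)"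
    proof -
      have "u *\<^sub>R (A1 + e *\<^sub>R mat 1) + v *\<^sub>R (A2 + e *\<^sub>R mat 1) = ?A + (u + v) *\<^sub>R (e *\<^sub>R mat 1)"
        by (simp only: scaleR_add_right scaleR_add_left add_ac)
      thus ?thesis using assms(7) by simp
    qed
    have eqB: "?B + e *\<^sub>R mat 1 = u *\<^sub>R (B1 + e *\<^sub>R mat 1) + v *\<^sub>R (B2 + e *\<^sub>R mat 1)"
    proof -
      have "u *\<^sub>R (B1 + e *\<^sub>R mat 1) + v *\<^sub>R (B2 + e *\<^sub>R mat 1) = ?B + (u + v) *\<^sub>R (e *\<^sub>R mat 1)"
        by (simp only: scaleR_add_right scaleR_add_left add_ac)
      thus ?thesis using assms(7) by simp
    qed
    show ?case unfolding eqA eqB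
      using psd_eps[OF assms(1) elim] psd_eps[OF assms(2) elim] psd_eps[OF assms(3) elim] psd_eps[OF assms(4) elim]
        psd_eps[OF pA(1) elim] psd_eps[OF pA(2) elim] assms(5,6)
      by (intro FF_concave_pd) (auto simp: eqA[symmetric] eqB[symmetric])
  qed
  show ?thesis
    by (rule tendsto_le[OF trivial_limit_at_right_real lim2 lim1 ev])
qed

lemma norm_sq_convex:
  fixes a b :: "'a::real_inner"
  assumes "u \<ge> 0" "v \<ge> 0" "u + v = 1"
  shows "(norm (u *\<^sub>R a + v *\<^sub>R b))^2 \<le> u * (norm a)^2 + v * (norm b)^2"
proof -
  have "u * (norm a)^2 + v * (norm b)^2 - (norm (u *\<^sub>R a + v *\<^sub>R b))^2 = u * v * (norm (a - b))^2"
  proof -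
    have v: "v = 1 - u" using assms by simp
    show ?thesis unfolding power2_norm_eq_inner v
      by (simp add: inner_add_left inner_add_right inner_diff_left inner_diff_right inner_commute[of b a] algebra_simps power2_eq_square)
  qed
  moreover have "0 \<le> u * v * (norm (a - b))^2" using assms by simp
  ultimately show ?thesis by linarith
qed

lemma gelbrich_sq:
  fixes S1 S2 :: "real^'n^'n"
  assumes "psd S1" "psd S2"
  shows "(gelbrich (m1, S1) (m2, S2))^2 = (norm (m1 - m2))^2 + trace S1 + trace S2 - 2 * FF S1 S2"
proof -
  have tr: "trace (S1 + S2 - 2 *\<^sub>R msqrt (msqrt S2 ** S1 ** msqrt S2)) = trace S1 + trace S2 - 2 * FF S1 S2"
    by (simp add: trace_add trace_sub trace_scaleR FF_def)
  have "0 \<le> (norm (m1 - m2))^2 + trace S1 + trace S2 - 2 * FF S1 S2"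
    using FF_le_trace[OF assms] zero_le_power2[of "norm (m1 - m2)"] by linarith
  thus ?thesis unfolding gelbrich_def by (simp add: tr)
qed

lemma convex_psd_set: "convex (psd_set :: (real^'n^'n) set)"
  unfolding convex_def psd_set_def by (auto intro!: psd_add psd_scale)

theorem mainTheorem2:
  fixes f :: "(real^'n) \<times> (real^'n) \<times> (real^'n^'n) \<times> (real^'n^'n) \<Rightarrow> real"
  defines "f \<equiv> (\<lambda>(m1, m2, S1, S2). (gelbrich (m1, S1) (m2, S2))\<^sup>2)"
  shows "convex_on (UNIV \<times> UNIV \<times> psd_set \<times> psd_set) f
         \<and> continuous_on (UNIV \<times> UNIV \<times> psd_set \<times> psd_set) f"
proof -
  define D where "D = (UNIV \<times> UNIV \<times> psd_set \<times> psd_set :: ((real^'n) \<times> (real^'n) \<times> (real^'n^'n) \<times> (real^'n^'n)) set)"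
  define g where "g = (\<lambda>(m1::real^'n, m2::real^'n, S1::real^'n^'n, S2::real^'n^'n).
      (norm (m1 - m2))^2 + trace S1 + trace S2 - 2 * FF S1 S2)"
  have fg: "f p = g p" if "p \<in> D" for p
    using that by (auto simp: D_def f_def g_def psd_set_def gelbrich_sq)
  have cD: "convex D" unfolding D_def
    by (intro convex_Times convex_UNIV convex_psd_set)
  have "convex_on D f"
    unfolding convex_on_def
  proof (intro conjI cD ballI allI impI)
    fix x y and u v :: real
    assume x: "x \<in> D" and y: "y \<in> D" and u: "0 \<le> u" and v: "0 \<le> v" and uv: "u + v = 1"
    obtain a1 a2 A1 A2 where xe: "x = (a1, a2, A1, A2)" by (cases x) auto
    obtain b1 b2 B1 B2 where ye: "y = (b1, b2, B1, B2)" by (cases y) auto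
    have pA: "psd A1" "psd A2" using x by (auto simp: xe D_def psd_set_def)
    have pB: "psd B1" "psd B2" using y by (auto simp: ye D_def psd_set_def)
    have xy: "u *\<^sub>R x + v *\<^sub>R y \<in> D" using cD x y u v uv by (simp add: convex_def)
    have comb: "u *\<^sub>R x + v *\<^sub>R y = (u *\<^sub>R a1 + v *\<^sub>R b1, u *\<^sub>R a2 + v *\<^sub>R b2, u *\<^sub>R A1 + v *\<^sub>R B1, u *\<^sub>R A2 + v *\<^sub>R B2)"
      by (simp add: xe ye)
    have n: "(norm ((u *\<^sub>R a1 + v *\<^sub>R b1) - (u *\<^sub>R a2 + v *\<^sub>R b2)))^2 \<le> u * (norm (a1 - a2))^2 + v * (norm (b1 - b2))^2"
    proof -
      have "(u *\<^sub>R a1 + v *\<^sub>R b1) - (u *\<^sub>R a2 + v *\<^sub>R b2) = u *\<^sub>R (a1 - a2) + v *\<^sub>R (b1 - b2)"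
        by (simp add: algebra_simps)
      thus ?thesis using norm_sq_convex[OF u v uv] by simp
    qed
    have F: "u * FF A1 A2 + v * FF B1 B2 \<le> FF (u *\<^sub>R A1 + v *\<^sub>R B1) (u *\<^sub>R A2 + v *\<^sub>R B2)"
      by (rule FF_concave[OF pA(1) pB(1) pA(2) pB(2) u v uv])
    have "g (u *\<^sub>R x + v *\<^sub>R y) \<le> u * g x + v * g y"
      unfolding comb using n F uv
      by (simp add: g_def xe ye trace_add trace_scaleR algebra_simps)
    thus "f (u *\<^sub>R x + v *\<^sub>R y) \<le> u * f x + v * f y"
      using fg[OF xy] fg[OF x] fg[OF y] by simp
  qed
  moreover have "continuous_on D f"
  proof -
    have gi: "g = (\<lambda>p. (norm (fst p - fst (snd p)))^2 + trace (fst (snd (snd p))) + trace (snd (snd (snd p)))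
         - 2 * FF (fst (snd (snd p))) (snd (snd (snd p))))"
      by (auto simp: g_def)
    have cF: "continuous_on D (\<lambda>p. FF (fst (snd (snd p))) (snd (snd (snd p))))"
      by (rule continuous_on_compose2[OF continuous_on_FF, of _ "\<lambda>p. snd (snd p)"])
        (auto simp: D_def intro!: continuous_intros)
    have "continuous_on D g" unfolding gi
      by (intro continuous_intros cF)
    moreover have "continuous_on D f \<longleftrightarrow> continuous_on D g"
      by (rule continuous_on_cong[OF refl]) (rule fg)
    ultimately show ?thesis by simp
  qed
  ultimately show ?thesis by (simp add: D_def)
qed

end
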